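(* Assume $\mathrm{recc}(C)\subseteq\mathrm{recc}(P^B)$. Fix $k\in N_2$ and assume $N_0\not\subseteq J$. Fix $\hat x\in P^B$. Then the set function $g:2^{M'}\to\mathbb{R}$, $$g(S)=\sum_{i\in S}\hat x_i-\sum_{j\in N\setminus J}\frac{\hat x_j}{\varepsilon'_j(S)},$$ is supermodular. Hence $\max_{S\subseteq M'}g(S)$ is a supermodular maximization problem.
   Context: Let $A\in\mathbb{R}^{m\times n}$ have full row rank, $b\in\mathbb{R}^m$, and $P=\{x\in\mathbb{R}^n_+:Ax=b\}$. Let $C\subseteq\mathbb{R}^n$ be an open convex set. Fix a basis $B$ of $P$ with nonbasic set $N=\{1,\dots,n\}\setminus B$. Write $P=\{x:x_i=\bar b_i-\sum_{j\in N}\bar a_{ij}x_j\ (i\in B),\ x\ge0\}$ with $\bar b\ge0$. The basic solution $\bar x$ has $\bar x_i=\bar b_i$ ($i\in B$) and $0$ ($i\in N$). $P^B$ is obtained by dropping $x_i\ge0$ for $i\in B$. For $j\in N$, $\bar r^j$ has $\bar r^j_k=-\bar a_{kj}$ ($k\in B$), $\bar r^j_j=1$, and $0$ otherwise. Thus $P^B=\{\bar x+\sum_{j\in N}x_j\bar r^j:x_j\ge0\}$. It is assumed that $\bar x\notin\mathrm{cl}(C)$. For $j\in N$, $\alpha_j=\inf\{\lambda\ge0:\bar x+\lambda\bar r^j\in C\}$ and $\beta_j=\sup\{\lambda\ge0:\bar x+\lambda\bar r^j\in C\}$, with $\alpha_j=+\infty$, $\beta_j=-\infty$ if the halfline misses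 $C$. Define - $N_0=\{j:\alpha_j=+\infty,\beta_j=-\infty\}$; - $N_2=\{j:\alpha_j\in(0,\infty),\beta_j\in(\alpha_j,\infty)\}$. For a set $K$, $\mathrm{recc}(K)=\{d:x+\lambda d\in K\ \forall x\in K,\lambda\ge0\}$. We use the convention $t/+\infty=0$. For $k\in N_2$, $S_k^C=\{\bar x\}+\mathrm{conv}\big(\bigcup_{j\in N_2}\{\lambda\bar r^j:0\le\lambda<\beta_j\}\big)+\{\lambda\bar r^k:\lambda\le0\}+\mathrm{recc}(C)$. Let $J=\{i\in N:\bar r^i\in\mathrm{recc}(S_k^C)\}$. For $i\in J$, $j\in N\setminus J$, $\gamma'_{ij}=\sup\{\gamma\ge0:\bar r^i+\gamma\bar r^j\in\mathrm{recc}(S_k^C)\}$. Let $M'=\{i\in J:\gamma'_{ij}>0\ \forall j\in N\setminus J\}$. Finally, $\varepsilon'_j(S)=\min_{i\in S}\gamma'_{ij}$ for $S\ne\emptyset$ and $\varepsilon'_j(\emptyset)=+\infty$. *)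

theory Defs
  imports "HOL-Analysis.Analysis"
begin

text \<open>Simplex-tableau data for a basis B (index type 'n, N = UNIV - B).
  abar i j and bbar i are the tableau coefficients.\<close>

definition basic_sol :: "'n::finite set \<Rightarrow> ('n \<Rightarrow> real) \<Rightarrow> real^'n" where
  "basic_sol B bbar = (\<chi> i. if i \<in> B then bbar i else 0)"

definition ray :: "'n::finite set \<Rightarrow> ('n \<Rightarrow> 'n \<Rightarrow> real) \<Rightarrow> 'n \<Rightarrow> real^'n" where
  "ray B abar j = (\<chi> k. if k \<in> B then - abar k j else if k = j then 1 else 0)"

text \<open>P^B: the polyhedron obtained by dropping nonnegativity of basic variables.\<close>
definition PB :: "'n::finite set \<Rightarrow> ('n \<Rightarrow> 'n \<Rightarrow> real) \<Rightarrow> ('n \<Rightarrow> real) \<Rightarrow> (real^'n) set" where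
  "PB B abar bbar = {basic_sol B bbar + (\<Sum>j\<in>-B. t j *\<^sub>R ray B abar j) | t. \<forall>j\<in>-B. t j \<ge> 0}"

definition recc :: "(real^'n) set \<Rightarrow> (real^'n) set" where
  "recc K = {d. \<forall>x\<in>K. \<forall>l::real. l \<ge> 0 \<longrightarrow> x + l *\<^sub>R d \<in> K}"

text \<open>alpha/beta as extended reals: Inf {} = +\<infinity>, Sup {} = -\<infinity> in ereal,
  matching the conventions of the paper.\<close>
definition alpha :: "(real^'n) set \<Rightarrow> real^'n \<Rightarrow> real^'n \<Rightarrow> ereal" where
  "alpha C x r = Inf (ereal ` {l. l \<ge> 0 \<and> x + l *\<^sub>R r \<in> C})"

definition beta :: "(real^'n) set \<Rightarrow> real^'n \<Rightarrow> real^'n \<Rightarrow> ereal" where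
  "beta C x r = Sup (ereal ` {l. l \<ge> 0 \<and> x + l *\<^sub>R r \<in> C})"

definition N0 :: "(real^'n::finite) set \<Rightarrow> 'n set \<Rightarrow> ('n \<Rightarrow> 'n \<Rightarrow> real) \<Rightarrow> ('n \<Rightarrow> real) \<Rightarrow> 'n set" where
  "N0 C B abar bbar = {j \<in> -B. alpha C (basic_sol B bbar) (ray B abar j) = \<infinity>
                              \<and> beta C (basic_sol B bbar) (ray B abar j) = -\<infinity>}"

definition N2 :: "(real^'n::finite) set \<Rightarrow> 'n set \<Rightarrow> ('n \<Rightarrow> 'n \<Rightarrow> real) \<Rightarrow> ('n \<Rightarrow> real) \<Rightarrow> 'n set" where
  "N2 C B abar bbar = {j \<in> -B.
     (let a = alpha C (basic_sol B bbar) (ray B abar j); b = beta C (basic_sol B bbar) (ray B abar j)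
      in 0 < a \<and> a < \<infinity> \<and> a < b \<and> b < \<infinity>)}"

definition SkC :: "(real^'n::finite) set \<Rightarrow> 'n set \<Rightarrow> ('n \<Rightarrow> 'n \<Rightarrow> real) \<Rightarrow> ('n \<Rightarrow> real) \<Rightarrow> 'n \<Rightarrow> (real^'n) set" where
  "SkC C B abar bbar k =
     {basic_sol B bbar + u + \<mu> *\<^sub>R ray B abar k + d | u \<mu> d.
        u \<in> convex hull (\<Union>j\<in>N2 C B abar bbar.
               {l *\<^sub>R ray B abar j | l. 0 \<le> l \<and> ereal l < beta C (basic_sol B bbar) (ray B abar j)})
        \<and> \<mu> \<le> 0 \<and> d \<in> recc C}"

definition Jset :: "(real^'n::finite) set \<Rightarrow> 'n set \<Rightarrow> ('n \<Rightarrow> 'n \<Rightarrow> real) \<Rightarrow> ('n \<Rightarrow> real) \<Rightarrow> 'n \<Rightarrow> 'n set" where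
  "Jset C B abar bbar k = {i \<in> -B. ray B abar i \<in> recc (SkC C B abar bbar k)}"

definition gamma' :: "(real^'n::finite) set \<Rightarrow> 'n set \<Rightarrow> ('n \<Rightarrow> 'n \<Rightarrow> real) \<Rightarrow> ('n \<Rightarrow> real) \<Rightarrow> 'n \<Rightarrow> 'n \<Rightarrow> 'n \<Rightarrow> ereal" where
  "gamma' C B abar bbar k i j =
     Sup (ereal ` {\<gamma>. \<gamma> \<ge> 0 \<and> ray B abar i + \<gamma> *\<^sub>R ray B abar j \<in> recc (SkC C B abar bbar k)})"

definition M' :: "(real^'n::finite) set \<Rightarrow> 'n set \<Rightarrow> ('n \<Rightarrow> 'n \<Rightarrow> real) \<Rightarrow> ('n \<Rightarrow> real) \<Rightarrow> 'n \<Rightarrow> 'n set" where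
  "M' C B abar bbar k = {i \<in> Jset C B abar bbar k.
      \<forall>j \<in> -B - Jset C B abar bbar k. gamma' C B abar bbar k i j > 0}"

text \<open>epsilon'_j(S) = min_{i in S} gamma'_{ij}; Inf {} = +\<infinity> in ereal.\<close>
definition eps' :: "(real^'n::finite) set \<Rightarrow> 'n set \<Rightarrow> ('n \<Rightarrow> 'n \<Rightarrow> real) \<Rightarrow> ('n \<Rightarrow> real) \<Rightarrow> 'n \<Rightarrow> 'n \<Rightarrow> 'n set \<Rightarrow> ereal" where
  "eps' C B abar bbar k j S = Inf ((\<lambda>i. gamma' C B abar bbar k i j) ` S)"

definition div_ext :: "real \<Rightarrow> ereal \<Rightarrow> real" where
  "div_ext t e = (if e = \<infinity> then 0 else t / real_of_ereal e)"

definition gfun :: "(real^'n::finite) set \<Rightarrow> 'n set \<Rightarrow> ('n \<Rightarrow> 'n \<Rightarrow> real) \<Rightarrow> ('n \<Rightarrow> real) \<Rightarrow> 'n \<Rightarrow> real^'n \<Rightarrow> 'n set \<Rightarrow> real" where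
  "gfun C B abar bbar k xh S =
     (\<Sum>i\<in>S. xh $ i) - (\<Sum>j\<in>-B - Jset C B abar bbar k. div_ext (xh $ j) (eps' C B abar bbar k j S))"

definition supermodular_on :: "'a set \<Rightarrow> ('a set \<Rightarrow> real) \<Rightarrow> bool" where
  "supermodular_on M g \<longleftrightarrow>
     (\<forall>S T. S \<subseteq> M \<longrightarrow> T \<subseteq> M \<longrightarrow> g S + g T \<le> g (S \<union> T) + g (S \<inter> T))"

end

theory Submission
  imports Defs
begin

lemma xh_nonneg:
  assumes "xh \<in> PB B abar bbar" "j \<notin> B"
  shows "xh $ j \<ge> 0"
proof -
  obtain t where t: "xh = basic_sol B bbar + (\<Sum>l\<in>-B. t l *\<^sub>R ray B abar l)" "\<forall>l\<in>-B. t l \<ge> 0"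
    using assms(1) unfolding PB_def by blast
  have "(\<Sum>l\<in>-B. t l *\<^sub>R ray B abar l) $ j = (\<Sum>l\<in>-B. t l * (ray B abar l $ j))"
    by (simp add: sum_component)
  also have "\<dots> = (\<Sum>l\<in>-B. if l = j then t l else 0)"
    using assms(2) by (intro sum.cong) (auto simp: ray_def)
  also have "\<dots> = t j" using assms(2) by simp
  finally show ?thesis using t assms(2) by (simp add: basic_sol_def)
qed

lemma div_ext_anti:
  assumes "x \<ge> 0" "0 < a" "a \<le> b"
  shows "div_ext x b \<le> div_ext x a"
proof (cases "b = \<infinity>")
  case True
  then show ?thesis using assms
    by (cases a) (auto simp: div_ext_def)
next
  case False
  then obtain rb where rb: "b = ereal rb" using assms by (cases b) auto
  then obtain ra where ra: "a = ereal ra" using assms by (cases a) auto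
  have "0 < ra" "ra \<le> rb" using assms ra rb by auto
  then show ?thesis using assms ra rb by (simp add: div_ext_def frac_le)
qed

lemma eps_pos:
  fixes f :: "'a \<Rightarrow> ereal"
  assumes "finite S" "\<forall>i\<in>S. f i > 0"
  shows "0 < Inf (f ` S)"
proof (cases "S = {}")
  case True then show ?thesis by (simp add: top_ereal_def)
next
  case False
  then have "Inf_fin (f ` S) \<in> f ` S"
    using assms False by (intro Inf_fin.closed) (auto simp: min_def)
  moreover have "Inf_fin (f ` S) = Inf (f ` S)"
    using assms False by (intro Inf_fin_Inf) auto
  ultimately have "Inf (f ` S) \<in> f ` S" by simp
  then show ?thesis using assms by auto
qed

theorem proposition9:
  fixes A :: "real^'n::finite^'m::finite" and b :: "real^'m"
    and C :: "(real^'n) set"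
    and B :: "'n set" and abar :: "'n \<Rightarrow> 'n \<Rightarrow> real" and bbar :: "'n \<Rightarrow> real"
    and k :: 'n and xh :: "real^'n"
  assumes full_row_rank: "rank A = CARD('m)"
    and C_open: "open C" and C_convex: "convex C"
    and B_basis: "card B = CARD('m)" "inj_on (\<lambda>j. column j A) B"
                 "independent ((\<lambda>j. column j A) ` B)"
    and tableau: "\<And>x. A *v x = b \<longleftrightarrow> (\<forall>i\<in>B. x $ i = bbar i - (\<Sum>j\<in>-B. abar i j * x $ j))"
    and bbar_nonneg: "\<And>i. i \<in> B \<Longrightarrow> bbar i \<ge> 0"
    and xbar_not_cl: "basic_sol B bbar \<notin> closure C"
    and recc_sub: "recc C \<subseteq> recc (PB B abar bbar)"
    and k_N2: "k \<in> N2 C B abar bbar"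
    and N0_not_J: "\<not> N0 C B abar bbar \<subseteq> Jset C B abar bbar k"
    and xh_PB: "xh \<in> PB B abar bbar"
  shows "supermodular_on (M' C B abar bbar k) (gfun C B abar bbar k xh)"
  unfolding supermodular_on_def
proof (intro allI impI)
  fix S T assume S: "S \<subseteq> M' C B abar bbar k" and T: "T \<subseteq> M' C B abar bbar k"
  let ?J = "Jset C B abar bbar k"
  let ?e = "eps' C B abar bbar k"
  let ?D = "\<lambda>j U. div_ext (xh $ j) (?e j U)"
  have pos: "0 < ?e j U" if "U \<subseteq> M' C B abar bbar k" "j \<in> -B - ?J" for j U
    unfolding eps'_def using that by (intro eps_pos) (auto simp: M'_def)
  have key: "?D j (S \<union> T) + ?D j (S \<inter> T) \<le> ?D j S + ?D j T" if j: "j \<in> -B - ?J" for j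
  proof -
    have x0: "xh $ j \<ge> 0" using xh_nonneg[OF xh_PB] j by auto
    have un: "?e j (S \<union> T) = min (?e j S) (?e j T)"
      unfolding eps'_def by (simp add: INF_union inf_min)
    have it1: "?e j S \<le> ?e j (S \<inter> T)" "?e j T \<le> ?e j (S \<inter> T)"
      unfolding eps'_def by (auto intro: INF_superset_mono)
    have pS: "0 < ?e j S" and pT: "0 < ?e j T" using pos S T j by auto
    show ?thesis
    proof (cases "?e j S \<le> ?e j T")
      case True
      have "?D j (S \<inter> T) \<le> ?D j T" using div_ext_anti[OF x0 pT it1(2)] .
      then show ?thesis using True un by (simp add: min_def)
    next
      case False
      have "?D j (S \<inter> T) \<le> ?D j S" using div_ext_anti[OF x0 pS it1(1)] .
      then show ?thesis using False un by (simp add: min_def)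
    qed
  qed
  have s1: "(\<Sum>i\<in>S \<union> T. xh $ i) + (\<Sum>i\<in>S \<inter> T. xh $ i) = (\<Sum>i\<in>S. xh $ i) + (\<Sum>i\<in>T. xh $ i)"
    by (rule sum.union_inter) auto
  have s2: "(\<Sum>j\<in>-B - ?J. ?D j (S \<union> T)) + (\<Sum>j\<in>-B - ?J. ?D j (S \<inter> T))
          \<le> (\<Sum>j\<in>-B - ?J. ?D j S) + (\<Sum>j\<in>-B - ?J. ?D j T)"
    unfolding sum.distrib[symmetric] by (rule sum_mono) (rule key)
  show "gfun C B abar bbar k xh S + gfun C B abar bbar k xh T
        \<le> gfun C B abar bbar k xh (S \<union> T) + gfun C B abar bbar k xh (S \<inter> T)"
    unfolding gfun_def using s1 s2 by linarith
qed

end
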